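(* Let $d\ge1$ and $p>1$, and let $q>1$ satisfy $p^{-1}+q^{-1}=1$. Let $A\subset\mathbb{Z}^d$ be a finite set generating $\mathbb{Z}^d$ as a group, and let $\pi$ be a probability measure on $\mathbb{Z}^d$ with $\pi(x)>0$ for $x\in A$, $\pi(x)=0$ for $x\notin A$, and $\pi(-x)=\pi(x)$ for all $x$. Let $Q\ge0$ on $\mathbb{Z}^d$ with $\lim_{|x|\to\infty}Q(x)=0$. For a probability measure $\nu$ on $A$ set $\phi_\nu(x)=\nu(x)^{1/q}\pi(x)^{1/p}$ for $x\in A$ and $\phi_\nu(x)=0$ for $x\in\mathbb{Z}^d\setminus A$. Let $\mathcal{M}(A)$ denote the set of probability measures on $A$. Then, with the convention $x_0=0$, $$\limsup_{n\to\infty}\frac1n\log\sup_{\nu\in\mathcal{M}(A)}\sum_{x_1,\dots,x_n\in\mathbb{Z}^d}\prod_{k=1}^n\phi_\nu(x_k-x_{k-1})Q(x_k)\le\frac1p\log\tilde\rho,$$ where $$\tilde\rho=\sup_{|f|_2=1}\sum_{x\in\mathbb{Z}^d}\pi(x)\Big[\sum_{y\in\mathbb{Z}^d}\sqrt{Q(x+y)}\sqrt{Q(y)}f(x+y)f(y)\Big]^p,$$ the supremum over real-valued $f$ on $\mathbb{Z}^d$ with $\sum_x f^2(x)=1$. *)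

theory Defs
  imports "HOL-Analysis.Analysis"
begin

text \<open>Points of the lattice Z^d are modelled as int ^ 'd for a finite index type 'd
  (so d = CARD('d) \<ge> 1 is arbitrary).\<close>

inductive_set gen_subgroup :: "(int ^ 'd) set \<Rightarrow> (int ^ 'd) set" for A where
  gen_zero: "0 \<in> gen_subgroup A"
| gen_base: "a \<in> A \<Longrightarrow> a \<in> gen_subgroup A"
| gen_add: "x \<in> gen_subgroup A \<Longrightarrow> y \<in> gen_subgroup A \<Longrightarrow> x + y \<in> gen_subgroup A"
| gen_neg: "x \<in> gen_subgroup A \<Longrightarrow> - x \<in> gen_subgroup A"

definition eln :: "real \<Rightarrow> ereal" where
  "eln x = (if x \<le> 0 then - \<infinity> else ereal (ln x))"

definition prob_measures_on :: "(int ^ 'd) set \<Rightarrow> (int ^ 'd \<Rightarrow> real) set" where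
  "prob_measures_on A = {\<nu>. (\<forall>x\<in>A. \<nu> x \<ge> 0) \<and> (\<forall>x. x \<notin> A \<longrightarrow> \<nu> x = 0) \<and> sum \<nu> A = 1}"

definition phi :: "real \<Rightarrow> real \<Rightarrow> (int ^ 'd) set \<Rightarrow> (int ^ 'd \<Rightarrow> real) \<Rightarrow> (int ^ 'd \<Rightarrow> real)
                   \<Rightarrow> int ^ 'd \<Rightarrow> real" where
  "phi p q A \<pi> \<nu> x = (if x \<in> A then \<nu> x powr (1/q) * \<pi> x powr (1/p) else 0)"

text \<open>Paths x_0 = 0, x_1, ..., x_n in Z^d, encoded as functions nat => Z^d that are
  0 at index 0 and beyond n (in bijection with (Z^d)^n).\<close>
definition paths :: "nat \<Rightarrow> (nat \<Rightarrow> int ^ 'd) set" where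
  "paths n = {xs. xs 0 = 0 \<and> (\<forall>k>n. xs k = 0)}"

definition path_sum :: "real \<Rightarrow> real \<Rightarrow> (int ^ 'd) set \<Rightarrow> (int ^ 'd \<Rightarrow> real) \<Rightarrow> (int ^ 'd \<Rightarrow> real)
                   \<Rightarrow> (int ^ 'd \<Rightarrow> real) \<Rightarrow> nat \<Rightarrow> real" where
  "path_sum p q A \<pi> Q \<nu> n =
     infsum (\<lambda>xs. \<Prod>k\<in>{1..n}. phi p q A \<pi> \<nu> (xs k - xs (k - 1)) * Q (xs k)) (paths n)"

definition rho_tilde :: "real \<Rightarrow> (int ^ 'd \<Rightarrow> real) \<Rightarrow> (int ^ 'd \<Rightarrow> real) \<Rightarrow> real" where
  "rho_tilde p \<pi> Q = Sup {infsum (\<lambda>x. \<pi> x *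
        \<bar>infsum (\<lambda>y. sqrt (Q (x + y)) * sqrt (Q y) * f (x + y) * f y) UNIV\<bar> powr p) UNIV
      | f :: int ^ 'd \<Rightarrow> real. ((\<lambda>x. (f x)\<^sup>2) has_sum 1) UNIV}"

end

theory Submission
  imports Defs
begin

lemma fin_supp_infsum:
  fixes g :: "'a \<Rightarrow> real"
  assumes "finite U" "\<And>y. y \<notin> U \<Longrightarrow> g y = 0"
  shows "infsum g UNIV = sum g U"
proof -
  have "infsum g UNIV = infsum g U"
    by (rule infsum_cong_neutral) (use assms in auto)
  then show ?thesis using assms by simp
qed

lemma shift_infsum:
  fixes g :: "'a::group_add \<Rightarrow> real"
  shows "infsum (\<lambda>y. g (y + a)) UNIV = infsum g UNIV"
proof -
  have "bij_betw (\<lambda>y. y + a) UNIV UNIV"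
    by (rule bij_betwI[where g="\<lambda>y. y - a"]) auto
  then show ?thesis by (rule infsum_reindex_bij_betw)
qed

lemma sum_shift_fin:
  fixes g :: "'a::ab_group_add \<Rightarrow> real"
  assumes "finite U" "finite V" "\<And>y. y \<notin> U \<Longrightarrow> g y = 0" "\<And>y. y \<notin> V \<Longrightarrow> g (y + a) = 0"
  shows "sum g U = (\<Sum>y\<in>V. g (y + a))"
proof -
  have "sum g U = infsum g UNIV" using fin_supp_infsum[OF assms(1,3)] by simp
  also have "\<dots> = infsum (\<lambda>y. g (y + a)) UNIV" by (simp add: shift_infsum)
  also have "\<dots> = (\<Sum>y\<in>V. g (y + a))" using fin_supp_infsum[OF assms(2,4)] by simp
  finally show ?thesis .
qed

lemma telescope:
  fixes w :: "nat \<Rightarrow> real" and t :: real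
  assumes "t \<noteq> 0"
  shows "(\<Sum>k\<in>{1..N}. w (Suc k) / t^k) = t * (\<Sum>k\<in>{1..N}. w k / t^k) - w 1 + w (Suc N) / t^N"
proof (induction N)
  case 0
  then show ?case by simp
next
  case (Suc N)
  have "t * (w (Suc N) / t ^ Suc N) = w (Suc N) / t^N" using assms by (simp add: field_simps)
  then show ?case using Suc by (simp add: algebra_simps)
qed

lemma growth_bound:
  fixes w :: "nat \<Rightarrow> 'a \<Rightarrow> real" and U :: "'a set"
  assumes U: "finite U" and t: "t > \<theta>" "\<theta> \<ge> 0" and N: "N \<ge> 1"
  and nonneg: "\<And>k y. w k y \<ge> 0"
  and key: "(\<Sum>y\<in>U. (\<Sum>k\<in>{1..N}. w k y / t^k) * (\<Sum>k\<in>{1..N}. w (Suc k) y / t^k))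
             \<le> \<theta> * (\<Sum>y\<in>U. (\<Sum>k\<in>{1..N}. w k y / t^k)^2)"
  shows "(\<Sum>y\<in>U. (w N y)^2) \<le> (t^N / (t-\<theta>))^2 * (\<Sum>y\<in>U. (w 1 y)^2)"
proof -
  define h where "h y = (\<Sum>k\<in>{1..N}. w k y / t^k)" for y
  have tpos: "t > 0" using t by simp
  have hnn: "h y \<ge> 0" for y unfolding h_def using nonneg tpos by (auto intro!: sum_nonneg)
  have Th: "(\<Sum>k\<in>{1..N}. w (Suc k) y / t^k) = t * h y - w 1 y + w (Suc N) y / t^N" for y
    unfolding h_def using telescope[of t "\<lambda>k. w k y" N] tpos by simp
  have key': "(\<Sum>y\<in>U. h y * (t * h y - w 1 y + w (Suc N) y / t^N)) \<le> \<theta> * (\<Sum>y\<in>U. (h y)^2)"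
    using key unfolding h_def[symmetric] Th .
  have "(\<Sum>y\<in>U. h y * (t * h y - w 1 y)) \<le> (\<Sum>y\<in>U. h y * (t * h y - w 1 y + w (Suc N) y / t^N))"
    by (intro sum_mono) (use hnn nonneg tpos in \<open>auto simp: algebra_simps\<close>)
  also note key'
  finally have A: "(\<Sum>y\<in>U. h y * (t * h y - w 1 y)) \<le> \<theta> * (\<Sum>y\<in>U. (h y)^2)" .
  define e where "e = t - \<theta>"
  have epos: "e > 0" using t e_def by simp
  have B: "h y * w 1 y \<le> e/2 * (h y)^2 + (w 1 y)^2 / (2*e)" for y
  proof -
    have "0 \<le> (e * h y - w 1 y)^2" by simp
    then have "2 * e * (h y * w 1 y) \<le> e^2 * (h y)^2 + (w 1 y)^2"
      by (simp add: power2_eq_square algebra_simps)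
    then show ?thesis using epos by (simp add: field_simps power2_eq_square)
  qed
  have E1: "(\<Sum>y\<in>U. h y * (t * h y - w 1 y)) = t * (\<Sum>y\<in>U. (h y)^2) - (\<Sum>y\<in>U. h y * w 1 y)"
    by (simp add: algebra_simps sum_subtractf sum_distrib_left power2_eq_square)
  have "(\<Sum>y\<in>U. h y * w 1 y) \<le> (\<Sum>y\<in>U. e/2 * (h y)^2 + (w 1 y)^2 / (2*e))"
    by (rule sum_mono, rule B)
  then have E2: "(\<Sum>y\<in>U. h y * w 1 y) \<le> e/2 * (\<Sum>y\<in>U. (h y)^2) + (\<Sum>y\<in>U. (w 1 y)^2) / (2*e)"
    by (simp add: sum.distrib sum_distrib_left sum_divide_distrib)
  have "e/2 * (\<Sum>y\<in>U. (h y)^2) \<le> (\<Sum>y\<in>U. (w 1 y)^2) / (2*e)"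
  proof -
    define X where "X = (\<Sum>y\<in>U. (h y)^2)"
    define Y where "Y = (\<Sum>y\<in>U. h y * w 1 y)"
    define Z where "Z = (\<Sum>y\<in>U. (w 1 y)^2)"
    have "t * X - Y \<le> \<theta> * X" using A E1 unfolding X_def Y_def by simp
    moreover have "Y \<le> e/2 * X + Z/(2*e)" using E2 unfolding X_def Y_def Z_def .
    moreover have "e * X = t * X - \<theta> * X" unfolding e_def by (simp add: algebra_simps)
    ultimately show ?thesis unfolding X_def[symmetric] Z_def[symmetric] by linarith
  qed
  then have C: "(\<Sum>y\<in>U. (h y)^2) \<le> (\<Sum>y\<in>U. (w 1 y)^2) / e^2"
    using epos by (simp add: field_simps power2_eq_square)
  have D: "(w N y)^2 \<le> t^(2*N) * (h y)^2" for y
  proof -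
    have "w N y / t^N \<le> h y" unfolding h_def
      using N by (intro member_le_sum) (use nonneg tpos in auto)
    then have "w N y \<le> t^N * h y" using tpos by (simp add: field_simps)
    then have "(w N y)^2 \<le> (t^N * h y)^2" using nonneg by (intro power_mono) auto
    moreover have "t^(2*N) = (t^N)^2" by (metis power_mult mult.commute)
    ultimately show ?thesis by (simp add: power_mult_distrib)
  qed
  have "(\<Sum>y\<in>U. (w N y)^2) \<le> (\<Sum>y\<in>U. t^(2*N) * (h y)^2)"
    by (rule sum_mono, rule D)
  also have "\<dots> = t^(2*N) * (\<Sum>y\<in>U. (h y)^2)" by (simp add: sum_distrib_left)
  also have "\<dots> \<le> t^(2*N) * ((\<Sum>y\<in>U. (w 1 y)^2) / e^2)"
    using C tpos by (intro mult_left_mono) auto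
  also have "\<dots> = (t^N / (t-\<theta>))^2 * (\<Sum>y\<in>U. (w 1 y)^2)"
    by (simp add: e_def power_divide power_mult field_simps)
  finally show ?thesis .
qed

lemma holder_young:
  fixes A :: "'a set" and \<nu> \<pi> c :: "'a \<Rightarrow> real"
  assumes pq: "p > 1" "q > 1" "1/p + 1/q = 1" and fA: "finite A"
    and nu: "\<And>a. a \<in> A \<Longrightarrow> \<nu> a \<ge> 0" "sum \<nu> A = 1"
    and pi: "\<And>a. a \<in> A \<Longrightarrow> \<pi> a > 0" and c: "\<And>a. a \<in> A \<Longrightarrow> c a \<ge> 0"
  shows "(\<Sum>a\<in>A. \<nu> a powr (1/q) * \<pi> a powr (1/p) * c a) \<le> (\<Sum>a\<in>A. \<pi> a * c a powr p) powr (1/p)"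
proof -
  define B where "B = (\<Sum>a\<in>A. \<pi> a * c a powr p)"
  have Bnn: "B \<ge> 0" unfolding B_def using pi by (intro sum_nonneg) (simp add: less_imp_le)
  show ?thesis
  proof (cases "B = 0")
    case True
    have "\<forall>a\<in>A. \<pi> a * c a powr p = 0"
      using True unfolding B_def by (subst sum_nonneg_eq_0_iff[symmetric]) (use fA pi in \<open>auto simp: less_imp_le\<close>)
    then have "\<forall>a\<in>A. c a = 0" using pi by fastforce
    then show ?thesis by (simp add: B_def[symmetric] True)
  next
    case False
    then have Bpos: "B > 0" using Bnn by simp
    define \<beta> where "\<beta> = B powr (1/p)"
    have bpos: "\<beta> > 0" unfolding \<beta>_def using Bpos by simp
    have Y: "\<nu> a powr (1/q) * \<pi> a powr (1/p) * c a \<le> \<beta> * (\<nu> a / q + \<pi> a * c a powr p / (B * p))"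
      if a: "a \<in> A" for a
    proof -
      have y: "\<nu> a powr (1/q) * (\<pi> a powr (1/p) * c a / \<beta>) \<le>
           (\<nu> a powr (1/q)) powr q / q + (\<pi> a powr (1/p) * c a / \<beta>) powr p / p"
        using Youngs_inequality[of q p "\<nu> a powr (1/q)" "\<pi> a powr (1/p) * c a / \<beta>"] pq nu a pi c bpos
        by (simp add: add.commute less_imp_le)
      have e1: "(\<nu> a powr (1/q)) powr q = \<nu> a"
        using nu(1)[OF a] pq by (simp add: powr_powr)
      have e2: "(\<pi> a powr (1/p) * c a / \<beta>) powr p = \<pi> a * c a powr p / B"
        using pi[OF a] c[OF a] pq bpos Bpos unfolding \<beta>_def
        by (simp add: powr_divide powr_mult powr_powr less_imp_le)
      have "\<nu> a powr (1/q) * \<pi> a powr (1/p) * c a = \<beta> * (\<nu> a powr (1/q) * (\<pi> a powr (1/p) * c a / \<beta>))"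
        using bpos by (simp add: field_simps)
      also have "\<dots> \<le> \<beta> * (\<nu> a / q + \<pi> a * c a powr p / B / p)"
        using y e1 e2 bpos by (intro mult_left_mono) auto
      finally show ?thesis by simp
    qed
    have "(\<Sum>a\<in>A. \<nu> a powr (1/q) * \<pi> a powr (1/p) * c a) \<le> (\<Sum>a\<in>A. \<beta> * (\<nu> a / q + \<pi> a * c a powr p / (B * p)))"
      by (rule sum_mono) (rule Y)
    also have "\<dots> = \<beta> * (sum \<nu> A / q + B / (B * p))"
      unfolding B_def by (simp add: sum_distrib_left sum.distrib sum_divide_distrib[symmetric] algebra_simps)
    also have "\<dots> = \<beta>" using nu(2) Bpos pq by simp
    finally show ?thesis unfolding \<beta>_def B_def .
  qed
qed

lemma inner_bound:
  fixes Q f :: "'a::ab_group_add \<Rightarrow> real"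
  assumes Q: "\<And>x. 0 \<le> Q x" "\<And>x. Q x \<le> M" and f2: "((\<lambda>x. (f x)^2) has_sum 1) UNIV"
  shows "\<bar>infsum (\<lambda>y. sqrt (Q (x + y)) * sqrt (Q y) * f (x + y) * f y) UNIV\<bar> \<le> M"
proof -
  define g where "g y = sqrt (Q (x + y)) * sqrt (Q y) * f (x + y) * f y" for y
  define G where "G y = M/2 * ((f (x + y))^2 + (f y)^2)" for y
  have M0: "M \<ge> 0" using order_trans[OF Q(1) Q(2)] .
  have bij: "bij_betw (\<lambda>y. x + y) UNIV UNIV"
    by (rule bij_betwI[where g="\<lambda>y. y - x"]) auto
  have f2s: "((\<lambda>y. (f (x + y))^2) has_sum 1) UNIV"
    using has_sum_reindex_bij_betw[OF bij, of "\<lambda>y. (f y)^2"] f2 by simp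
  have G: "(G has_sum M) UNIV"
    using has_sum_cmult_right[OF has_sum_add[OF f2s f2], of "M/2"] unfolding G_def by simp
  have gG: "norm (g y) \<le> G y" for y
  proof -
    have s: "sqrt (Q (x + y)) * sqrt (Q y) \<le> M"
    proof -
      have "sqrt (Q (x + y)) * sqrt (Q y) = sqrt (Q (x + y) * Q y)" by (simp add: real_sqrt_mult)
      also have "\<dots> \<le> sqrt (M * M)" using Q M0 by (intro real_sqrt_le_mono mult_mono) auto
      also have "\<dots> = M" using M0 by simp
      finally show ?thesis .
    qed
    have ff: "\<bar>f (x + y) * f y\<bar> \<le> ((f (x + y))^2 + (f y)^2) / 2"
    proof -
      have "0 \<le> (\<bar>f (x + y)\<bar> - \<bar>f y\<bar>)^2" by simp
      then show ?thesis by (simp add: power2_eq_square algebra_simps abs_mult)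
    qed
    have "norm (g y) = (sqrt (Q (x + y)) * sqrt (Q y)) * \<bar>f (x + y) * f y\<bar>"
      unfolding g_def using Q(1) by (simp add: abs_mult)
    also have "\<dots> \<le> M * (((f (x + y))^2 + (f y)^2) / 2)"
      using s ff M0 by (intro mult_mono) auto
    finally show ?thesis unfolding G_def by simp
  qed
  show ?thesis
  proof (cases "g summable_on UNIV")
    case True
    have "norm (infsum g UNIV) \<le> M"
      by (rule norm_infsum_le[OF has_sum_infsum[OF True] G]) (use gG in auto)
    then show ?thesis unfolding g_def by simp
  next
    case False
    then have "infsum g UNIV = 0" by (simp add: infsum_not_exists)
    then show ?thesis using M0 unfolding g_def by simp
  qed
qed

lemma rho_elem_bound:
  fixes Q f \<pi> :: "'a::ab_group_add \<Rightarrow> real"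
  assumes Q: "\<And>x. 0 \<le> Q x" "\<And>x. Q x \<le> M" and f2: "((\<lambda>x. (f x)^2) has_sum 1) UNIV"
    and fA: "finite A" and pi0: "\<And>x. x \<notin> A \<Longrightarrow> \<pi> x = 0" and pinn: "\<And>x. \<pi> x \<ge> 0"
    and p: "p > 0"
  shows "infsum (\<lambda>x. \<pi> x * \<bar>infsum (\<lambda>y. sqrt (Q (x + y)) * sqrt (Q y) * f (x + y) * f y) UNIV\<bar> powr p) UNIV
           \<le> (\<Sum>x\<in>A. \<pi> x) * M powr p"
    and "0 \<le> infsum (\<lambda>x. \<pi> x * \<bar>infsum (\<lambda>y. sqrt (Q (x + y)) * sqrt (Q y) * f (x + y) * f y) UNIV\<bar> powr p) UNIV"
proof -
  define I where "I x = infsum (\<lambda>y. sqrt (Q (x + y)) * sqrt (Q y) * f (x + y) * f y) UNIV" for x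
  have eq: "infsum (\<lambda>x. \<pi> x * \<bar>I x\<bar> powr p) UNIV = (\<Sum>x\<in>A. \<pi> x * \<bar>I x\<bar> powr p)"
    by (rule fin_supp_infsum[OF fA]) (simp add: pi0)
  have "(\<Sum>x\<in>A. \<pi> x * \<bar>I x\<bar> powr p) \<le> (\<Sum>x\<in>A. \<pi> x * M powr p)"
  proof (rule sum_mono)
    fix x
    have "\<bar>I x\<bar> powr p \<le> M powr p"
      unfolding I_def using inner_bound[OF Q f2, where x=x] p by (intro powr_mono2) auto
    then show "\<pi> x * \<bar>I x\<bar> powr p \<le> \<pi> x * M powr p" using pinn by (intro mult_left_mono) auto
  qed
  then show "infsum (\<lambda>x. \<pi> x * \<bar>infsum (\<lambda>y. sqrt (Q (x + y)) * sqrt (Q y) * f (x + y) * f y) UNIV\<bar> powr p) UNIV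
           \<le> (\<Sum>x\<in>A. \<pi> x) * M powr p"
    using eq unfolding I_def by (simp add: sum_distrib_right)
  have "0 \<le> (\<Sum>x\<in>A. \<pi> x * \<bar>I x\<bar> powr p)" using pinn by (intro sum_nonneg) auto
  then show "0 \<le> infsum (\<lambda>x. \<pi> x * \<bar>infsum (\<lambda>y. sqrt (Q (x + y)) * sqrt (Q y) * f (x + y) * f y) UNIV\<bar> powr p) UNIV"
    using eq unfolding I_def by simp
qed

lemma rho_props:
  fixes Q \<pi> :: "int ^ 'd \<Rightarrow> real"
  assumes Q: "\<And>x. 0 \<le> Q x" "\<And>x. Q x \<le> M"
    and fA: "finite A" and pi0a: "\<forall>x. x \<notin> A \<longrightarrow> \<pi> x = 0" and pinna: "\<forall>x. \<pi> x \<ge> 0"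
    and p: "p > 0"
  defines "S \<equiv> {infsum (\<lambda>x. \<pi> x *
        \<bar>infsum (\<lambda>y. sqrt (Q (x + y)) * sqrt (Q y) * f (x + y) * f y) UNIV\<bar> powr p) UNIV
      | f :: int ^ 'd \<Rightarrow> real. ((\<lambda>x. (f x)\<^sup>2) has_sum 1) UNIV}"
  shows "bdd_above S" "S \<noteq> {}" "rho_tilde p \<pi> Q = Sup S" "rho_tilde p \<pi> Q \<ge> 0"
proof -
  have pi0: "\<And>x. x \<notin> A \<Longrightarrow> \<pi> x = 0" using pi0a by auto
  have pinn: "\<And>x. \<pi> x \<ge> 0" using pinna by auto
  show "rho_tilde p \<pi> Q = Sup S" unfolding rho_tilde_def S_def ..
  show bdd: "bdd_above S" unfolding S_def
    by (rule bdd_aboveI[where M="(\<Sum>x\<in>A. \<pi> x) * M powr p"])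
       (auto intro: rho_elem_bound(1)[OF Q _ fA pi0 pinn p])
  define f0 :: "int ^ 'd \<Rightarrow> real" where "f0 x = (if x = 0 then 1 else 0)" for x
  have f0sq: "((\<lambda>x. (f0 x)\<^sup>2) has_sum 1) UNIV"
  proof -
    have "((\<lambda>x. (f0 x)\<^sup>2) has_sum 1) {0}" using has_sum_finite[of "{0}" "\<lambda>x. (f0 x)\<^sup>2"] by (simp add: f0_def)
    then show ?thesis by (subst has_sum_cong_neutral[where T="{0}"]) (auto simp: f0_def)
  qed
  then have mem: "infsum (\<lambda>x. \<pi> x *
        \<bar>infsum (\<lambda>y. sqrt (Q (x + y)) * sqrt (Q y) * f0 (x + y) * f0 y) UNIV\<bar> powr p) UNIV \<in> S"
    unfolding S_def by blast
  then show "S \<noteq> {}" by auto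
  have "0 \<le> Sup S"
    using rho_elem_bound(2)[where Q=Q and M=M and f=f0 and A=A and \<pi>=\<pi> and p=p, OF Q f0sq fA pi0 pinn p]
      cSup_upper[OF mem bdd] by linarith
  then show "rho_tilde p \<pi> Q \<ge> 0" unfolding rho_tilde_def S_def by simp
qed

definition Top :: "(int ^ 'd \<Rightarrow> real) \<Rightarrow> (int ^ 'd) set \<Rightarrow> (int ^ 'd \<Rightarrow> real) \<Rightarrow> (int ^ 'd \<Rightarrow> real) \<Rightarrow> int ^ 'd \<Rightarrow> real"
  where "Top Q A \<phi> v y = (\<Sum>a\<in>A. v (y - a) * sqrt (Q (y - a)) * \<phi> a * sqrt (Q y))"

lemma key_quad:
  fixes Q \<pi> \<nu> h :: "int ^ 'd \<Rightarrow> real" and A U :: "(int ^ 'd) set"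
  assumes pq: "p > 1" "q > 1" "1/p + 1/q = 1" and fA: "finite A"
    and pi: "\<forall>x\<in>A. \<pi> x > 0" and pi0: "\<forall>x. x \<notin> A \<longrightarrow> \<pi> x = 0"
    and nu: "\<nu> \<in> prob_measures_on A"
    and Q: "\<And>x. 0 \<le> Q x" "\<And>x. Q x \<le> M"
    and U: "finite U" and h: "\<And>y. h y \<ge> 0" "\<And>y. y \<notin> U \<Longrightarrow> h y = 0"
  shows "(\<Sum>y\<in>U. h y * Top Q A (phi p q A \<pi> \<nu>) h y) \<le> rho_tilde p \<pi> Q powr (1/p) * (\<Sum>y\<in>U. (h y)^2)"
proof -
  define \<phi> where "\<phi> = phi p q A \<pi> \<nu>"
  define c where "c a = (\<Sum>y\<in>U. h (a + y) * h y * sqrt (Q (a + y)) * sqrt (Q y))" for a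
  define H where "H = (\<Sum>y\<in>U. (h y)^2)"
  define \<rho> where "\<rho> = rho_tilde p \<pi> Q"
  have pinn: "\<And>x. \<pi> x \<ge> 0" using pi pi0 by (metis less_imp_le order_refl)
  have pi0': "\<And>x. x \<notin> A \<Longrightarrow> \<pi> x = 0" using pi0 by auto
  have p0: "p > 0" using pq by simp
  have pinna: "\<forall>x. \<pi> x \<ge> 0" using pinn by auto
  note rp = rho_props[where Q=Q and M=M and A=A and \<pi>=\<pi> and p=p, OF Q fA pi0 pinna p0]
  have cnn: "c a \<ge> 0" for a unfolding c_def using h Q by (intro sum_nonneg) auto
  have nu': "\<And>a. a \<in> A \<Longrightarrow> \<nu> a \<ge> 0" "sum \<nu> A = 1" using nu unfolding prob_measures_on_def by auto
  have step_a: "(\<Sum>y\<in>U. h y * (h (y - a) * sqrt (Q (y - a)) * \<phi> a * sqrt (Q y))) = \<phi> a * c a" for a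
  proof -
    have "(\<Sum>y\<in>U. h y * (h (y - a) * sqrt (Q (y - a)) * \<phi> a * sqrt (Q y)))
        = (\<Sum>y\<in>U. h (y + a) * (h (y + a - a) * sqrt (Q (y + a - a)) * \<phi> a * sqrt (Q (y + a))))"
      by (rule sum_shift_fin[OF U U]) (use h in auto)
    also have "\<dots> = \<phi> a * c a" unfolding c_def
      by (simp add: sum_distrib_left algebra_simps)
    finally show ?thesis .
  qed
  have LHS: "(\<Sum>y\<in>U. h y * Top Q A \<phi> h y) = (\<Sum>a\<in>A. \<phi> a * c a)"
  proof -
    have "(\<Sum>y\<in>U. h y * Top Q A \<phi> h y) = (\<Sum>y\<in>U. \<Sum>a\<in>A. h y * (h (y - a) * sqrt (Q (y - a)) * \<phi> a * sqrt (Q y)))"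
      unfolding Top_def by (simp add: sum_distrib_left)
    also have "\<dots> = (\<Sum>a\<in>A. \<Sum>y\<in>U. h y * (h (y - a) * sqrt (Q (y - a)) * \<phi> a * sqrt (Q y)))"
      by (rule sum.swap)
    also have "\<dots> = (\<Sum>a\<in>A. \<phi> a * c a)" using step_a by simp
    finally show ?thesis .
  qed
  have hold: "(\<Sum>a\<in>A. \<phi> a * c a) \<le> (\<Sum>a\<in>A. \<pi> a * c a powr p) powr (1/p)"
  proof -
    have "(\<Sum>a\<in>A. \<phi> a * c a) = (\<Sum>a\<in>A. \<nu> a powr (1/q) * \<pi> a powr (1/p) * c a)"
      by (rule sum.cong) (auto simp: \<phi>_def phi_def)
    also have "\<dots> \<le> (\<Sum>a\<in>A. \<pi> a * c a powr p) powr (1/p)"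
      by (rule holder_young[OF pq fA nu']) (use pi cnn in auto)
    finally show ?thesis .
  qed
  have Hnn: "H \<ge> 0" unfolding H_def by (simp add: sum_nonneg)
  show ?thesis
  proof (cases "H = 0")
    case True
    then have "\<forall>y\<in>U. (h y)^2 = 0" unfolding H_def using U by (subst (asm) sum_nonneg_eq_0_iff) auto
    then have "\<forall>y\<in>U. h y = 0" by simp
    then have "(\<Sum>y\<in>U. h y * Top Q A \<phi> h y) = 0" by simp
    then show ?thesis using True unfolding H_def \<phi>_def by simp
  next
    case False
    then have Hpos: "H > 0" using Hnn by simp
    define f where "f y = h y / sqrt H" for y
    have fsq: "((\<lambda>x. (f x)\<^sup>2) has_sum 1) UNIV"
    proof -
      have "((\<lambda>x. (f x)\<^sup>2) has_sum (\<Sum>y\<in>U. (f y)^2)) U" using U by simp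
      moreover have "(\<Sum>y\<in>U. (f y)^2) = 1"
        unfolding f_def using Hpos by (simp add: power_divide sum_divide_distrib[symmetric] H_def[symmetric])
      ultimately have "((\<lambda>x. (f x)\<^sup>2) has_sum 1) U" by simp
      then show ?thesis by (subst has_sum_cong_neutral[where T=U]) (auto simp: f_def h)
    qed
    have inner: "infsum (\<lambda>y. sqrt (Q (a + y)) * sqrt (Q y) * f (a + y) * f y) UNIV = c a / H" for a
    proof -
      have "infsum (\<lambda>y. sqrt (Q (a + y)) * sqrt (Q y) * f (a + y) * f y) UNIV
          = (\<Sum>y\<in>U. sqrt (Q (a + y)) * sqrt (Q y) * f (a + y) * f y)"
        by (rule fin_supp_infsum[OF U]) (simp add: f_def h)
      also have "\<dots> = c a / H" unfolding c_def f_def using Hpos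
        by (simp add: sum_divide_distrib algebra_simps)
      finally show ?thesis .
    qed
    have val: "infsum (\<lambda>x. \<pi> x * \<bar>infsum (\<lambda>y. sqrt (Q (x + y)) * sqrt (Q y) * f (x + y) * f y) UNIV\<bar> powr p) UNIV
        = (\<Sum>a\<in>A. \<pi> a * c a powr p) / H powr p"
    proof -
      have "infsum (\<lambda>x. \<pi> x * \<bar>infsum (\<lambda>y. sqrt (Q (x + y)) * sqrt (Q y) * f (x + y) * f y) UNIV\<bar> powr p) UNIV
          = (\<Sum>a\<in>A. \<pi> a * \<bar>infsum (\<lambda>y. sqrt (Q (a + y)) * sqrt (Q y) * f (a + y) * f y) UNIV\<bar> powr p)"
        by (rule fin_supp_infsum[OF fA]) (simp add: pi0')
      also have "\<dots> = (\<Sum>a\<in>A. \<pi> a * c a powr p / H powr p)"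
        by (rule sum.cong) (use cnn Hpos in \<open>auto simp: inner powr_divide\<close>)
      also have "\<dots> = (\<Sum>a\<in>A. \<pi> a * c a powr p) / H powr p" by (simp add: sum_divide_distrib)
      finally show ?thesis .
    qed
    have "(\<Sum>a\<in>A. \<pi> a * c a powr p) / H powr p \<le> \<rho>"
    proof -
      have "infsum (\<lambda>x. \<pi> x * \<bar>infsum (\<lambda>y. sqrt (Q (x + y)) * sqrt (Q y) * f (x + y) * f y) UNIV\<bar> powr p) UNIV
         \<in> {infsum (\<lambda>x. \<pi> x *
        \<bar>infsum (\<lambda>y. sqrt (Q (x + y)) * sqrt (Q y) * f (x + y) * f y) UNIV\<bar> powr p) UNIV
      | f :: int ^ 'd \<Rightarrow> real. ((\<lambda>x. (f x)\<^sup>2) has_sum 1) UNIV}" using fsq by blast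
      from cSup_upper[OF this rp(1)] show ?thesis unfolding \<rho>_def val using rp(3) by argo
    qed
    then have B: "(\<Sum>a\<in>A. \<pi> a * c a powr p) \<le> \<rho> * H powr p" using Hpos by (simp add: field_simps)
    have rnn: "\<rho> \<ge> 0" unfolding \<rho>_def using rp(4) .
    have Bnn: "0 \<le> (\<Sum>a\<in>A. \<pi> a * c a powr p)" using pinn by (simp add: sum_nonneg)
    have "(\<Sum>a\<in>A. \<pi> a * c a powr p) powr (1/p) \<le> (\<rho> * H powr p) powr (1/p)"
      by (rule powr_mono2) (use B Bnn p0 in auto)
    also have "\<dots> = \<rho> powr (1/p) * H"
      using rnn Hpos p0 by (simp add: powr_mult powr_powr)
    finally show ?thesis using LHS hold unfolding \<phi>_def H_def \<rho>_def by linarith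
  qed
qed

definition Pset :: "(int ^ 'd) set \<Rightarrow> nat \<Rightarrow> (nat \<Rightarrow> int ^ 'd) set" where
  "Pset A n = {xs. xs 0 = 0 \<and> (\<forall>k>n. xs k = 0) \<and> (\<forall>k\<in>{1..n}. xs k - xs (k - 1) \<in> A)}"

definition Fp :: "(int ^ 'd \<Rightarrow> real) \<Rightarrow> (int ^ 'd \<Rightarrow> real) \<Rightarrow> nat \<Rightarrow> (nat \<Rightarrow> int ^ 'd) \<Rightarrow> real" where
  "Fp \<phi> Q n xs = (\<Prod>k\<in>{1..n}. \<phi> (xs k - xs (k - 1)) * Q (xs k))"

definition ext_path :: "nat \<Rightarrow> (nat \<Rightarrow> int ^ 'd) \<times> (int ^ 'd) \<Rightarrow> (nat \<Rightarrow> int ^ 'd)" where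
  "ext_path n = (\<lambda>(xs, a). xs(Suc n := xs n + a))"

lemma Pset_0: "Pset A 0 = {\<lambda>_. 0}"
  unfolding Pset_def by (auto intro!: ext) (metis gr0I)

lemma Pset_Suc: "Pset A (Suc n) = ext_path n ` (Pset A n \<times> A)"
proof
  show "ext_path n ` (Pset A n \<times> A) \<subseteq> Pset A (Suc n)"
  proof (clarify)
    fix xs a assume xs: "xs \<in> Pset A n" and a: "a \<in> A"
    have eqe: "ext_path n (xs, a) = xs(Suc n := xs n + a)" by (simp add: ext_path_def)
    show "ext_path n (xs, a) \<in> Pset A (Suc n)"
      unfolding eqe Pset_def mem_Collect_eq
    proof (intro conjI allI impI ballI)
      show "(xs(Suc n := xs n + a)) 0 = 0" using xs unfolding Pset_def by simp
    next
      fix k :: nat assume "k > Suc n" then show "(xs(Suc n := xs n + a)) k = 0"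
        using xs unfolding Pset_def by simp
    next
      fix k assume k: "k \<in> {1..Suc n}"
      show "(xs(Suc n := xs n + a)) k - (xs(Suc n := xs n + a)) (k - 1) \<in> A"
      proof (cases "k = Suc n")
        case True then show ?thesis using a by simp
      next
        case False
        then have "k \<in> {1..n}" using k by auto
        then show ?thesis using xs False unfolding Pset_def by auto
      qed
    qed
  qed
next
  show "Pset A (Suc n) \<subseteq> ext_path n ` (Pset A n \<times> A)"
  proof
    fix ys assume ys: "ys \<in> Pset A (Suc n)"
    define xs where "xs = ys(Suc n := 0)"
    define a where "a = ys (Suc n) - ys n"
    have "ys = ext_path n (xs, a)" unfolding ext_path_def xs_def a_def by (auto intro!: ext)
    moreover have "a \<in> A" using ys unfolding Pset_def a_def by force
    moreover have "xs \<in> Pset A n"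
      using ys unfolding Pset_def xs_def by auto
    ultimately show "ys \<in> ext_path n ` (Pset A n \<times> A)" by blast
  qed
qed

lemma inj_ext_path: "inj_on (ext_path n) (Pset A n \<times> A)"
proof (rule inj_onI, clarify)
  fix xs a ys b
  assume xs: "xs \<in> Pset A n" and ys: "ys \<in> Pset A n" and eq: "ext_path n (xs, a) = ext_path n (ys, b)"
  have "xs k = ys k" for k
  proof (cases "k = Suc n")
    case True then show ?thesis using xs ys unfolding Pset_def by auto
  next
    case False then show ?thesis using fun_cong[OF eq, of k] unfolding ext_path_def by simp
  qed
  then have "xs = ys" by auto
  moreover have "a = b" using fun_cong[OF eq, of "Suc n"] \<open>xs = ys\<close> unfolding ext_path_def by simp
  ultimately show "xs = ys \<and> a = b" by simp
qed

lemma finite_Pset: "finite A \<Longrightarrow> finite (Pset A n)"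
  by (induction n) (auto simp: Pset_0 Pset_Suc)

lemma Fp_ext:
  assumes "xs \<in> Pset A n"
  shows "Fp \<phi> Q (Suc n) (ext_path n (xs, a)) = Fp \<phi> Q n xs * (\<phi> a * Q (xs n + a))"
proof -
  have "Fp \<phi> Q (Suc n) (ext_path n (xs, a)) =
        (\<Prod>k\<in>{1..n}. \<phi> ((xs(Suc n := xs n + a)) k - (xs(Suc n := xs n + a)) (k - 1)) * Q ((xs(Suc n := xs n + a)) k))
        * (\<phi> a * Q (xs n + a))"
    unfolding Fp_def ext_path_def by (simp add: prod.nat_ivl_Suc')
  also have "(\<Prod>k\<in>{1..n}. \<phi> ((xs(Suc n := xs n + a)) k - (xs(Suc n := xs n + a)) (k - 1)) * Q ((xs(Suc n := xs n + a)) k))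
     = Fp \<phi> Q n xs"
    unfolding Fp_def by (rule prod.cong) auto
  finally show ?thesis .
qed

primrec Wf :: "(int ^ 'd \<Rightarrow> real) \<Rightarrow> (int ^ 'd \<Rightarrow> real) \<Rightarrow> (int ^ 'd) set \<Rightarrow> nat \<Rightarrow> int ^ 'd \<Rightarrow> real" where
  "Wf \<phi> Q A 0 y = (if y = 0 then 1 else 0)"
| "Wf \<phi> Q A (Suc n) y = (\<Sum>a\<in>A. Wf \<phi> Q A n (y - a) * \<phi> a) * Q y"

definition Rset :: "(int ^ 'd) set \<Rightarrow> nat \<Rightarrow> (int ^ 'd) set" where
  "Rset A n = (\<lambda>c. \<Sum>a\<in>A. of_nat (c a) *s a) ` (PiE A (\<lambda>_. {0..n}))"

lemma Rset_0: fixes A :: "(int ^ 'd) set" shows "0 \<in> Rset A 0"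
proof -
  have mem: "restrict (\<lambda>_. 0::nat) A \<in> PiE A (\<lambda>_. {0..0})" by auto
  have eq: "(\<Sum>a\<in>A. of_nat (restrict (\<lambda>_. 0::nat) A a) *s a) = (0 :: int ^ 'd)"
    by (intro sum.neutral) auto
  show ?thesis unfolding Rset_def by (rule image_eqI[where f="\<lambda>c. \<Sum>a\<in>A. of_nat (c a) *s a", OF eq[symmetric] mem])
qed

lemma Rset_step:
  fixes A :: "(int ^ 'd) set"
  assumes fA: "finite A" and x: "x \<in> Rset A n" and a: "a \<in> A"
  shows "x + a \<in> Rset A (Suc n)"
proof -
  obtain c where c: "c \<in> PiE A (\<lambda>_. {0..n})" and xc: "x = (\<Sum>b\<in>A. of_nat (c b) *s b)"
    using x unfolding Rset_def by auto
  define c' where "c' = c(a := Suc (c a))"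
  have c': "c' \<in> PiE A (\<lambda>_. {0..Suc n})"
    using c a unfolding c'_def PiE_iff extensional_def by auto
  have "(\<Sum>b\<in>A. of_nat (c' b) *s b) = of_nat (c' a) *s a + (\<Sum>b\<in>A - {a}. of_nat (c' b) *s b)"
    using fA a by (simp add: sum.remove)
  also have "(\<Sum>b\<in>A - {a}. of_nat (c' b) *s b) = (\<Sum>b\<in>A - {a}. of_nat (c b) *s b)"
    unfolding c'_def by (rule sum.cong) auto
  also have "of_nat (c' a) *s a = of_nat (c a) *s a + (a :: int ^ 'd)"
    unfolding c'_def by (simp add: vector_sadd_rdistrib)
  also have "of_nat (c a) *s a + a + (\<Sum>b\<in>A - {a}. of_nat (c b) *s b) = x + a"
  proof -
    have "x = of_nat (c a) *s a + (\<Sum>b\<in>A - {a}. of_nat (c b) *s b)"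
      unfolding xc using fA a by (rule sum.remove)
    then show ?thesis by (simp only: add_ac)
  qed
  finally have eq: "(\<Sum>b\<in>A. of_nat (c' b) *s b) = x + a" .
  show ?thesis unfolding Rset_def by (rule image_eqI[where f="\<lambda>c. \<Sum>a\<in>A. of_nat (c a) *s a", OF eq[symmetric] c'])
qed

lemma finite_Rset: "finite A \<Longrightarrow> finite (Rset A n)"
  unfolding Rset_def by (intro finite_imageI finite_PiE) auto

lemma card_Rset: "finite A \<Longrightarrow> card (Rset A n) \<le> (Suc n) ^ card A"
proof -
  assume fA: "finite A"
  have "card (Rset A n) \<le> card (PiE A (\<lambda>_. {0..n}))" unfolding Rset_def
    by (rule card_image_le) (intro finite_PiE fA, auto)
  also have "\<dots> = (Suc n) ^ card A" using fA by (simp add: card_PiE)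
  finally show ?thesis .
qed


lemma Wf_zero: "finite A \<Longrightarrow> y \<notin> Rset A n \<Longrightarrow> Wf \<phi> Q A n y = 0"
proof (induction n arbitrary: y)
  case 0
  then show ?case using Rset_0[of A] by auto
next
  case (Suc n)
  have "\<forall>a\<in>A. y - a \<notin> Rset A n"
  proof
    fix a assume a: "a \<in> A"
    show "y - a \<notin> Rset A n"
    proof
      assume "y - a \<in> Rset A n"
      from Rset_step[OF Suc.prems(1) this a] Suc.prems(2) show False by simp
    qed
  qed
  then show ?case using Suc by simp
qed

lemma path_W:
  assumes fA: "finite A"
  shows "(\<Sum>xs\<in>Pset A n. Fp \<phi> Q n xs * G (xs n)) = (\<Sum>y\<in>Rset A n. Wf \<phi> Q A n y * G y)"
proof (induction n arbitrary: G)
  case 0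
  have "(\<Sum>y\<in>Rset A 0. Wf \<phi> Q A 0 y * G y) = (\<Sum>y\<in>Rset A 0. if y = 0 then G y else 0)"
    by (rule sum.cong) auto
  also have "\<dots> = G 0" using Rset_0[of A] finite_Rset[OF fA, of 0] by (simp add: sum.delta)
  finally show ?case by (simp add: Pset_0 Fp_def)
next
  case (Suc n)
  define G' where "G' x = (\<Sum>a\<in>A. \<phi> a * Q (x + a) * G (x + a))" for x
  have "(\<Sum>ys\<in>Pset A (Suc n). Fp \<phi> Q (Suc n) ys * G (ys (Suc n)))
      = (\<Sum>z\<in>Pset A n \<times> A. Fp \<phi> Q (Suc n) (ext_path n z) * G (ext_path n z (Suc n)))"
    unfolding Pset_Suc by (rule sum.reindex_cong[OF inj_ext_path]) auto
  also have "\<dots> = (\<Sum>xs\<in>Pset A n. \<Sum>a\<in>A. Fp \<phi> Q (Suc n) (ext_path n (xs, a)) * G (ext_path n (xs, a) (Suc n)))"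
    by (simp add: sum.cartesian_product case_prod_unfold)
  also have "\<dots> = (\<Sum>xs\<in>Pset A n. Fp \<phi> Q n xs * G' (xs n))"
    unfolding G'_def
  proof (rule sum.cong[OF refl])
    fix xs assume xs: "xs \<in> Pset A n"
    have at: "ext_path n (xs, a) (Suc n) = xs n + a" for a by (simp add: ext_path_def)
    show "(\<Sum>a\<in>A. Fp \<phi> Q (Suc n) (ext_path n (xs, a)) * G (ext_path n (xs, a) (Suc n)))
      = Fp \<phi> Q n xs * (\<Sum>a\<in>A. \<phi> a * Q (xs n + a) * G (xs n + a))"
      unfolding Fp_ext[OF xs] at by (simp add: sum_distrib_left algebra_simps)
  qed
  also have "\<dots> = (\<Sum>x\<in>Rset A n. Wf \<phi> Q A n x * G' x)" by (rule Suc.IH)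
  also have "\<dots> = (\<Sum>a\<in>A. \<Sum>x\<in>Rset A n. Wf \<phi> Q A n x * (\<phi> a * Q (x + a) * G (x + a)))"
    unfolding G'_def by (simp add: sum_distrib_left sum.swap[of _ A])
  also have "\<dots> = (\<Sum>a\<in>A. \<Sum>y\<in>Rset A (Suc n). Wf \<phi> Q A n (y - a) * \<phi> a * Q y * G y)"
  proof (rule sum.cong[OF refl])
    fix a assume a: "a \<in> A"
    have "(\<Sum>y\<in>Rset A (Suc n). Wf \<phi> Q A n (y - a) * \<phi> a * Q y * G y)
        = (\<Sum>x\<in>Rset A n. Wf \<phi> Q A n (x + a - a) * \<phi> a * Q (x + a) * G (x + a))"
    proof (rule sum_shift_fin[OF finite_Rset[OF fA] finite_Rset[OF fA]])
      fix y assume y: "y \<notin> Rset A (Suc n)"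
      have "y - a \<notin> Rset A n"
      proof
        assume "y - a \<in> Rset A n"
        from Rset_step[OF fA this a] y show False by simp
      qed
      then show "Wf \<phi> Q A n (y - a) * \<phi> a * Q y * G y = 0" using Wf_zero[OF fA] by simp
    next
      fix y assume "y \<notin> Rset A n"
      then show "Wf \<phi> Q A n (y + a - a) * \<phi> a * Q (y + a) * G (y + a) = 0" using Wf_zero[OF fA] by simp
    qed
    then show "(\<Sum>x\<in>Rset A n. Wf \<phi> Q A n x * (\<phi> a * Q (x + a) * G (x + a)))
        = (\<Sum>y\<in>Rset A (Suc n). Wf \<phi> Q A n (y - a) * \<phi> a * Q y * G y)"
      by (simp add: algebra_simps)
  qed
  also have "\<dots> = (\<Sum>y\<in>Rset A (Suc n). Wf \<phi> Q A (Suc n) y * G y)"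
    by (simp add: sum.swap[of _ A] sum_distrib_right)
  finally show ?case .
qed

lemma path_sum_eq:
  assumes fA: "finite A"
  shows "path_sum p q A \<pi> Q \<nu> n = (\<Sum>y\<in>Rset A n. Wf (phi p q A \<pi> \<nu>) Q A n y)"
proof -
  define \<phi> where "\<phi> = phi p q A \<pi> \<nu>"
  have "path_sum p q A \<pi> Q \<nu> n = infsum (Fp \<phi> Q n) (paths n)"
    unfolding path_sum_def Fp_def \<phi>_def ..
  also have "\<dots> = infsum (Fp \<phi> Q n) (Pset A n)"
  proof (rule infsum_cong_neutral)
    fix xs assume xs: "xs \<in> paths n - Pset A n"
    then obtain k where k: "k \<in> {1..n}" "xs k - xs (k - 1) \<notin> A"
      unfolding paths_def Pset_def by auto
    then have "\<phi> (xs k - xs (k - 1)) * Q (xs k) = 0" unfolding \<phi>_def phi_def by simp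
    then show "Fp \<phi> Q n xs = 0" unfolding Fp_def using k(1) by (intro prod_zero) auto
  qed (auto simp: paths_def Pset_def)
  also have "\<dots> = (\<Sum>xs\<in>Pset A n. Fp \<phi> Q n xs * (\<lambda>_. 1) (xs n))"
    using finite_Pset[OF fA] by simp
  also have "\<dots> = (\<Sum>y\<in>Rset A n. Wf \<phi> Q A n y * (\<lambda>_. 1) y)" by (rule path_W[OF fA])
  finally show ?thesis unfolding \<phi>_def by simp
qed

lemma sqrt_le_plus1:
  fixes x :: real assumes x: "0 \<le> x" shows "sqrt x \<le> x + 1"
proof (rule real_le_lsqrt)
  have "0 \<le> x * x" using x by simp
  then show "x \<le> (x + 1)\<^sup>2" using x by (simp add: power2_eq_square algebra_simps)
qed (use x in simp)

lemma single_bound: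
  fixes Q \<pi> \<nu> :: "int ^ 'd \<Rightarrow> real" and A :: "(int ^ 'd) set"
  assumes pq: "p > 1" "q > 1" "1/p + 1/q = 1" and fA: "finite A"
    and pi: "\<forall>x\<in>A. \<pi> x > 0" and pi0: "\<forall>x. x \<notin> A \<longrightarrow> \<pi> x = 0" and pisum: "sum \<pi> A = 1"
    and nu: "\<nu> \<in> prob_measures_on A"
    and Q: "\<And>x. 0 \<le> Q x" "\<And>x. Q x \<le> M"
    and t: "t > rho_tilde p \<pi> Q powr (1/p)" and N: "N \<ge> 1"
  shows "path_sum p q A \<pi> Q \<nu> N \<le> M * (card A + 1) / (t - rho_tilde p \<pi> Q powr (1/p)) * real (Suc N) ^ card A * t ^ N"
proof -
  define \<theta> where "\<theta> = rho_tilde p \<pi> Q powr (1/p)"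
  define \<phi> where "\<phi> = phi p q A \<pi> \<nu>"
  define W where "W = Wf \<phi> Q A"
  define w where "w k y = W k y / sqrt (Q y)" for k y
  have th0: "\<theta> \<ge> 0" unfolding \<theta>_def by simp
  have tpos: "t > 0" using t th0 unfolding \<theta>_def by linarith
  have nu': "\<And>a. a \<in> A \<Longrightarrow> \<nu> a \<ge> 0" "sum \<nu> A = 1" using nu unfolding prob_measures_on_def by auto
  have phinn: "\<phi> x \<ge> 0" for x unfolding \<phi>_def phi_def by simp
  have phi1: "\<phi> x \<le> 1" for x
  proof (cases "x \<in> A")
    case True
    have "\<nu> x \<le> 1" using member_le_sum[of x A \<nu>] nu' True fA by auto
    then have a: "\<nu> x powr (1/q) \<le> 1" using nu'(1)[OF True] pq by (intro powr_le1) auto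
    have "\<pi> x \<le> 1" using member_le_sum[of x A \<pi>] pi pisum True fA by (auto simp: less_imp_le)
    then have b: "\<pi> x powr (1/p) \<le> 1" using pi True pq by (intro powr_le1) auto
    show ?thesis unfolding \<phi>_def phi_def using True a b by (simp add: mult_le_one)
  qed (simp add: \<phi>_def phi_def)
  have Wnn: "W k y \<ge> 0" for k y
    unfolding W_def by (induction k arbitrary: y) (auto intro!: mult_nonneg_nonneg sum_nonneg simp: phinn Q)
  have wnn: "w k y \<ge> 0" for k y unfolding w_def using Wnn Q by simp
  have Ww: "W k y = w k y * sqrt (Q y)" if k1: "k \<ge> 1" for k y
  proof -
    obtain m where k: "k = Suc m" using k1 by (cases k) auto
    show ?thesis
    proof (cases "Q y = 0")
      case True then show ?thesis unfolding w_def W_def k by simp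
    next
      case False then show ?thesis unfolding w_def using Q(1)[of y] by simp
    qed
  qed
  have wstep: "w (Suc k) y = Top Q A \<phi> (w k) y" if "k \<ge> 1" for k y
  proof -
    have "w (Suc k) y = (\<Sum>a\<in>A. W k (y - a) * \<phi> a) * (Q y / sqrt (Q y))"
      unfolding w_def W_def by simp
    also have "Q y / sqrt (Q y) = sqrt (Q y)" using Q(1)[of y] by (simp add: real_div_sqrt)
    also have "(\<Sum>a\<in>A. W k (y - a) * \<phi> a) * sqrt (Q y) = Top Q A \<phi> (w k) y"
      unfolding Top_def using Ww[OF that] by (simp add: sum_distrib_right)
    finally show ?thesis .
  qed
  have wzero: "w k y = 0" if "y \<notin> Rset A k" for k y
    unfolding w_def W_def using Wf_zero[OF fA that] by simp
  define U where "U = (\<Union>k\<in>{1..Suc N}. Rset A k)"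
  have finU: "finite U" unfolding U_def using finite_Rset[OF fA] by auto
  have wU: "w k y = 0" if "k \<in> {1..Suc N}" "y \<notin> U" for k y
    using wzero that unfolding U_def by auto
  define h where "h y = (\<Sum>k\<in>{1..N}. w k y / t^k)" for y
  have hnn: "h y \<ge> 0" for y unfolding h_def using wnn tpos by (auto intro!: sum_nonneg)
  have hU: "h y = 0" if "y \<notin> U" for y unfolding h_def using wU[OF _ that] by simp
  have Th: "Top Q A \<phi> h y = (\<Sum>k\<in>{1..N}. w (Suc k) y / t^k)" for y
  proof -
    have "Top Q A \<phi> h y = (\<Sum>a\<in>A. \<Sum>k\<in>{1..N}. w k (y - a) * sqrt (Q (y - a)) * \<phi> a * sqrt (Q y) / t^k)"
      unfolding Top_def h_def by (simp add: sum_distrib_right sum_divide_distrib)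
    also have "\<dots> = (\<Sum>k\<in>{1..N}. Top Q A \<phi> (w k) y / t^k)"
      unfolding Top_def by (subst sum.swap) (simp add: sum_divide_distrib)
    also have "\<dots> = (\<Sum>k\<in>{1..N}. w (Suc k) y / t^k)"
      by (rule sum.cong) (auto simp: wstep)
    finally show ?thesis .
  qed
  have key: "(\<Sum>y\<in>U. h y * Top Q A \<phi> h y) \<le> \<theta> * (\<Sum>y\<in>U. (h y)^2)"
    unfolding \<phi>_def \<theta>_def by (rule key_quad[OF pq fA pi pi0 nu Q finU hnn hU])
  have gb: "(\<Sum>y\<in>U. (w N y)^2) \<le> (t^N / (t-\<theta>))^2 * (\<Sum>y\<in>U. (w 1 y)^2)"
    by (rule growth_bound[OF finU t[folded \<theta>_def] th0 N wnn]) (use key in \<open>simp add: h_def Th\<close>)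
  have w1: "w 1 y = (if y \<in> A then \<phi> y else 0) * sqrt (Q y)" for y
  proof -
    have "(\<Sum>a\<in>A. Wf \<phi> Q A 0 (y - a) * \<phi> a) = (\<Sum>a\<in>A. if a = y then \<phi> a else 0)"
      by (rule sum.cong) auto
    also have "\<dots> = (if y \<in> A then \<phi> y else 0)" using fA by (simp add: sum.delta')
    finally have "(\<Sum>a\<in>A. Wf \<phi> Q A 0 (y - a) * \<phi> a) = (if y \<in> A then \<phi> y else 0)" .
    moreover have "Q y / sqrt (Q y) = sqrt (Q y)" using Q(1)[of y] by (simp add: real_div_sqrt)
    ultimately show ?thesis unfolding w_def W_def by (simp add: times_divide_eq_right[symmetric])
  qed
  have w1sq: "(w 1 y)^2 \<le> M" for y
  proof -
    have "(w 1 y)^2 = (if y \<in> A then \<phi> y else 0)^2 * Q y" unfolding w1 using Q(1)[of y] by (simp add: power_mult_distrib)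
    also have "\<dots> \<le> 1 * M" using phi1[of y] phinn[of y] Q[of y] by (intro mult_mono) (auto simp: power_le_one)
    finally show ?thesis by simp
  qed
  have sumw1: "(\<Sum>y\<in>U. (w 1 y)^2) \<le> card A * M"
  proof -
    have "(\<Sum>y\<in>U. (w 1 y)^2) = infsum (\<lambda>y. (w 1 y)^2) UNIV"
      by (rule fin_supp_infsum[OF finU, symmetric]) (use wU in auto)
    also have "\<dots> = (\<Sum>y\<in>A. (w 1 y)^2)"
      by (rule fin_supp_infsum[OF fA]) (use w1 in auto)
    also have "\<dots> \<le> card A * M" using sum_bounded_above[of A "\<lambda>y. (w 1 y)^2" M] w1sq by auto
    finally show ?thesis .
  qed
  define b where "b = real (Suc N) ^ card A"
  have b1: "b \<ge> 1" unfolding b_def by simp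
  have SN: "path_sum p q A \<pi> Q \<nu> N = (\<Sum>y\<in>Rset A N. w N y * sqrt (Q y))"
    unfolding path_sum_eq[OF fA] \<phi>_def[symmetric] W_def[symmetric] using Ww N by simp
  have cs: "(\<Sum>y\<in>Rset A N. w N y * sqrt (Q y))^2 \<le> (\<Sum>y\<in>Rset A N. (w N y)^2) * (\<Sum>y\<in>Rset A N. (sqrt (Q y))^2)"
    by (rule Cauchy_Schwarz_ineq_sum)
  have X: "(\<Sum>y\<in>Rset A N. (w N y)^2) \<le> (t^N / (t-\<theta>))^2 * (card A * M)"
  proof -
    have "(\<Sum>y\<in>Rset A N. (w N y)^2) \<le> (\<Sum>y\<in>U. (w N y)^2)"
      by (rule sum_mono2[OF finU]) (use N in \<open>auto simp: U_def intro!: bexI[where x=N]\<close>)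
    also note gb
    also have "(t^N / (t-\<theta>))^2 * (\<Sum>y\<in>U. (w 1 y)^2) \<le> (t^N / (t-\<theta>))^2 * (card A * M)"
      using sumw1 by (intro mult_left_mono) auto
    finally show ?thesis .
  qed
  have Y: "(\<Sum>y\<in>Rset A N. (sqrt (Q y))^2) \<le> b * M"
  proof -
    have "(\<Sum>y\<in>Rset A N. (sqrt (Q y))^2) = (\<Sum>y\<in>Rset A N. Q y)" using Q(1) by simp
    also have "\<dots> \<le> card (Rset A N) * M" using sum_bounded_above[of "Rset A N" Q M] Q(2) by auto
    also have "\<dots> \<le> b * M"
    proof -
      have "real (card (Rset A N)) \<le> b" unfolding b_def using card_Rset[OF fA, of N]
        by (metis of_nat_le_iff of_nat_power)
      then show ?thesis using order_trans[OF Q(1) Q(2)] by (intro mult_right_mono) auto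
    qed
    finally show ?thesis .
  qed
  have M0: "M \<ge> 0" using order_trans[OF Q(1) Q(2)] .
  define S where "S = (\<Sum>y\<in>Rset A N. w N y * sqrt (Q y))"
  have "S^2 \<le> ((t^N / (t-\<theta>))^2 * (card A * M)) * (b * M)"
    unfolding S_def using cs X Y
    by (meson mult_mono order_trans sum_nonneg zero_le_power2)
  also have "\<dots> = (t^N / (t-\<theta>) * M)^2 * (card A * b)" by (simp add: power2_eq_square algebra_simps)
  finally have S2: "S^2 \<le> (t^N / (t-\<theta>) * M)^2 * (card A * b)" .
  have cab: "sqrt (card A * b) \<le> (card A + 1) * b"
  proof -
    have "sqrt (card A * b) \<le> card A * b + 1"
      using sqrt_le_plus1[of "card A * b"] b1 by simp
    also have "\<dots> \<le> (card A + 1) * b" using b1 by (simp add: algebra_simps)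
    finally show ?thesis .
  qed
  have "S \<le> sqrt ((t^N / (t-\<theta>) * M)^2 * (card A * b))" using S2 by (simp add: real_le_rsqrt)
  also have "\<dots> = (t^N / (t-\<theta>) * M) * sqrt (card A * b)"
    using tpos t M0 unfolding \<theta>_def by (simp add: real_sqrt_mult)
  also have "\<dots> \<le> (t^N / (t-\<theta>) * M) * ((card A + 1) * b)"
    using cab tpos t M0 unfolding \<theta>_def by (intro mult_left_mono) auto
  also have "\<dots> = M * (card A + 1) / (t - \<theta>) * b * t ^ N" by (simp add: field_simps)
  finally show ?thesis unfolding SN S_def[symmetric] b_def \<theta>_def .
qed

theorem lemma4p2:
  fixes p q :: real and A :: "(int ^ 'd) set" and \<pi> Q :: "int ^ 'd \<Rightarrow> real"
  assumes "p > 1" and "q > 1" and "1/p + 1/q = 1"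
    and "finite A" and "gen_subgroup A = UNIV"
    and "\<forall>x\<in>A. \<pi> x > 0" and "\<forall>x. x \<notin> A \<longrightarrow> \<pi> x = 0"
    and "sum \<pi> A = 1" and "\<forall>x. \<pi> (- x) = \<pi> x"
    and "\<forall>x. Q x \<ge> 0" and "(Q \<longlongrightarrow> 0) cofinite"
  shows "limsup (\<lambda>n. ereal (1 / real n) *
            eln (Sup {path_sum p q A \<pi> Q \<nu> n | \<nu>. \<nu> \<in> prob_measures_on A}))
         \<le> ereal (1/p) * eln (rho_tilde p \<pi> Q)"
proof -
  have pq: "p > 1" "q > 1" "1/p + 1/q = 1" using assms(1-3) by auto
  have fA: "finite A" using assms(4) .
  have pi: "\<forall>x\<in>A. \<pi> x > 0" and pi0: "\<forall>x. x \<notin> A \<longrightarrow> \<pi> x = 0" and pisum: "sum \<pi> A = 1"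
    using assms(6-8) by auto
  have Qnn: "\<And>x. 0 \<le> Q x" using assms(10) by auto
  have p0: "p > 0" using pq by simp
  obtain M where QM: "\<And>x. Q x \<le> M" and M1: "M \<ge> 1"
  proof -
    have "eventually (\<lambda>x. Q x < 1) cofinite" using order_tendstoD(2)[OF assms(11)] by simp
    then have finE: "finite {x. \<not> Q x < 1}" by (simp add: eventually_cofinite)
    define M where "M = 1 + sum Q {x. \<not> Q x < 1}"
    have "Q x \<le> M" for x
    proof (cases "Q x < 1")
      case True
      have "0 \<le> sum Q {x. \<not> Q x < 1}" using Qnn by (simp add: sum_nonneg)
      then show ?thesis using True unfolding M_def by simp
    next
      case False
      then have "Q x \<le> sum Q {x. \<not> Q x < 1}" using finE Qnn by (intro member_le_sum) auto
      then show ?thesis unfolding M_def by simp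
    qed
    moreover have "M \<ge> 1" unfolding M_def using Qnn by (simp add: sum_nonneg)
    ultimately show ?thesis using that by blast
  qed
  note Q = Qnn QM
  have pinna: "\<forall>x. \<pi> x \<ge> 0" using pi pi0 by (metis less_imp_le order_refl)
  define \<rho> where "\<rho> = rho_tilde p \<pi> Q"
  define \<theta> where "\<theta> = \<rho> powr (1/p)"
  have rho0: "\<rho> \<ge> 0" unfolding \<rho>_def
    by (rule rho_props(4)[where Q=Q and M=M and A=A and \<pi>=\<pi> and p=p, OF Q fA pi0 pinna p0])
  have th0: "\<theta> \<ge> 0" unfolding \<theta>_def by simp
  define Sn where "Sn n = Sup {path_sum p q A \<pi> Q \<nu> n | \<nu>. \<nu> \<in> prob_measures_on A}" for n
  have piprob: "\<pi> \<in> prob_measures_on A"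
    unfolding prob_measures_on_def using pinna pi0 pisum by auto
  define k where "k = card A"
  have bound: "Sn n \<le> M * (k + 1) / (t - \<theta>) * real (Suc n) ^ k * t ^ n" if t: "t > \<theta>" and n: "n \<ge> 1" for t n
    unfolding Sn_def
  proof (rule cSup_least)
    show "{path_sum p q A \<pi> Q \<nu> n | \<nu>. \<nu> \<in> prob_measures_on A} \<noteq> {}" using piprob by blast
  next
    fix x assume "x \<in> {path_sum p q A \<pi> Q \<nu> n | \<nu>. \<nu> \<in> prob_measures_on A}"
    then obtain \<nu> where nu: "\<nu> \<in> prob_measures_on A" and x: "x = path_sum p q A \<pi> Q \<nu> n" by blast
    show "x \<le> M * (k + 1) / (t - \<theta>) * real (Suc n) ^ k * t ^ n"
      unfolding x k_def using single_bound[OF pq fA pi pi0 pisum nu Q _ n] t unfolding \<theta>_def \<rho>_def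
      by simp
  qed
  have lim_t: "limsup (\<lambda>n. ereal (1 / real n) * eln (Sn n)) \<le> ereal (ln t)" if t: "t > \<theta>" for t
  proof -
    have tpos: "t > 0" using t th0 by linarith
    define K where "K = M * (k + 1) / (t - \<theta>)"
    have Kpos: "K > 0" unfolding K_def using M1 t by simp
    define c where "c = ln K + k * ln 2"
    define Y where "Y n = ereal (c / real n + k * (ln (real n) / real n) + ln t)" for n
    have ev: "eventually (\<lambda>n. ereal (1 / real n) * eln (Sn n) \<le> Y n) sequentially"
      using eventually_ge_at_top[of 1]
    proof eventually_elim
      case (elim n)
      have npos: "real n > 0" using elim by simp
      show ?case
      proof (cases "Sn n \<le> 0")
        case True
        then show ?thesis using npos by (simp add: eln_def)
      next
        case False
        then have Spos: "Sn n > 0" by simp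
        have "ln (Sn n) \<le> ln (K * real (Suc n) ^ k * t ^ n)"
          using bound[OF t elim] Spos unfolding K_def by simp
        also have "\<dots> = ln K + k * ln (real (Suc n)) + n * ln t"
          using Kpos tpos by (simp add: ln_mult ln_realpow)
        also have "ln (real (Suc n)) \<le> ln 2 + ln (real n)"
        proof -
          have "real (Suc n) \<le> 2 * real n" using elim by simp
          then have "ln (real (Suc n)) \<le> ln (2 * real n)" using npos by simp
          also have "\<dots> = ln 2 + ln (real n)" using npos by (simp add: ln_mult)
          finally show ?thesis .
        qed
        then have "ln K + k * ln (real (Suc n)) + n * ln t \<le> ln K + k * (ln 2 + ln (real n)) + n * ln t"
          by (simp add: mult_left_mono)
        finally have L: "ln (Sn n) \<le> c + k * ln (real n) + n * ln t" unfolding c_def by (simp add: algebra_simps)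
        have "ln (Sn n) / real n \<le> (c + k * ln (real n) + n * ln t) / real n"
          using L npos by (simp add: divide_right_mono)
        also have "\<dots> = c / real n + k * (ln (real n) / real n) + ln t"
          using npos by (simp add: field_simps)
        finally have "ln (Sn n) / real n \<le> c / real n + k * (ln (real n) / real n) + ln t" .
        then show ?thesis using Spos unfolding Y_def eln_def by simp
      qed
    qed
    have "(\<lambda>n. c / real n + real k * (ln (real n) / real n) + ln t) \<longlonglongrightarrow> (0::real) + real k * 0 + ln t"
      by (intro tendsto_intros lim_ln_over_n)
    then have "(\<lambda>n. c / real n + real k * (ln (real n) / real n) + ln t) \<longlonglongrightarrow> ln t" by simp
    then have "Y \<longlonglongrightarrow> ereal (ln t)" unfolding Y_def by (simp add: tendsto_ereal)
    then have "limsup Y = ereal (ln t)" by (intro lim_imp_Limsup) auto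
    moreover have "limsup (\<lambda>n. ereal (1 / real n) * eln (Sn n)) \<le> limsup Y"
      by (rule Limsup_mono[OF ev])
    ultimately show ?thesis by simp
  qed
  define L where "L = limsup (\<lambda>n. ereal (1 / real n) * eln (Sn n))"
  have "L \<le> ereal (1/p) * eln \<rho>"
  proof (cases "\<rho> > 0")
    case True
    then have thpos: "\<theta> > 0" unfolding \<theta>_def by simp
    have e1: "eln \<rho> = ereal (ln \<rho>)" using True unfolding eln_def by simp
    have e2: "ln \<theta> = 1/p * ln \<rho>" unfolding \<theta>_def by (rule ln_powr)
    have rhs: "ereal (1/p) * eln \<rho> = ereal (ln \<theta>)" unfolding e1 e2 by simp
    have "L \<le> ereal (ln \<theta>) + ereal e" if e: "e > 0" for e
    proof -
      have gt: "\<theta> * exp e > \<theta>" using thpos e by simp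
      have "L \<le> ereal (ln (\<theta> * exp e))" using lim_t[OF gt] unfolding L_def .
      also have "ln (\<theta> * exp e) = ln \<theta> + e" using thpos by (simp add: ln_mult)
      also have "ereal (ln \<theta> + e) = ereal (ln \<theta>) + ereal e" by simp
      finally show ?thesis .
    qed
    then have "L \<le> ereal (ln \<theta>)" by (rule ereal_le_epsilon2)
    then show ?thesis unfolding rhs .
  next
    case False
    then have r0: "\<rho> = 0" using rho0 by simp
    then have th: "\<theta> = 0" unfolding \<theta>_def by simp
    have "L = -\<infinity>"
    proof (rule ereal_bot)
      fix B
      have gt: "exp B > \<theta>" using th by simp
      have "L \<le> ereal (ln (exp B))" using lim_t[OF gt] unfolding L_def .
      then show "L \<le> ereal B" by simp
    qed
    then show ?thesis by simp
  qed
  then show ?thesis unfolding L_def Sn_def \<rho>_def .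
qed

end
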